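(* Let $Q,H\in\mathbb{S}^n$ and $\mathcal{B}=\{B^1,\dots,B^m\}\subseteq\mathbb{S}^n$. Assume $\mathcal{B}$ satisfies Condition (B): for every $k$, $$\{X\in\mathbb{S}^n_+ : B^k\bullet X=0\}\subseteq \mathbb{J}_+(\mathcal{B}):=\{X\in\mathbb{S}^n_+ : B^j\bullet X\ge 0\ (1\le j\le m)\}.$$ Let $\overline{X}\in\mathbb{S}^n$ satisfy the KKT conditions: $\overline{X}\in\mathbb{J}_+(\mathcal{B})$, $H\bullet\overline{X}=1$, and there exist $\bar t\in\mathbb{R}$, $\bar y\in\mathbb{R}^m$ with $\bar y\ge 0$, and $\overline{Y}\in\mathbb{S}^n_+$ such that $Q-\bar tH-\sum_{k=1}^m\bar y_kB^k=\overline{Y}$, $\bar y_k(B^k\bullet\overline{X})=0$ $(1\le k\le m)$ and $\overline{Y}\bullet\overline{X}=0$. Suppose that $B^k\bullet\overline{X}=0$ for some $k\in\{1,\dots,m\}$. Then, with $r=\operatorname{rank}\overline{X}$, there exist $x\in\mathbb{R}^n$ and $\tau\ge 1/r$ with $H\bullet xx^T=\tau$ such that $\widetilde{X}=xx^T/\tau$ is an optimal solution of the SDP $$\eta=\inf\{Q\bullet X : X\in\mathbb{J}_+(\mathcal{B}),\ H\bullet X=1\}$$ and also an optimal solution of the QCQP $$\zeta=\inf\{Q\bullet X : X\in\mathbb{J}_+(\mathcal{B}),\ \operatorname{rank}X= 1,\ H\bullet X=1\},$$ with $Q\bullet\widetilde{X}=Q\bullet\overline{X}$.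
   Context: $\mathbb{S}^n$ denotes the space of real $n\times n$ symmetric matrices, $\mathbb{S}^n_+$ its cone of positive semidefinite matrices, and $A\bullet X=\sum_{i,j}A_{ij}X_{ij}$ the trace inner product. *)

theory Defs
  imports "HOL-Analysis.Analysis"
begin

definition symmetric_mat :: "real^'n^'n \<Rightarrow> bool" where
  "symmetric_mat A \<longleftrightarrow> transpose A = A"

definition psd :: "real^'n^'n \<Rightarrow> bool" where
  "psd X \<longleftrightarrow> symmetric_mat X \<and> (\<forall>v. v \<bullet> (X *v v) \<ge> 0)"

definition frob :: "real^'n^'n \<Rightarrow> real^'n^'n \<Rightarrow> real" where
  "frob A X = (\<Sum>i\<in>UNIV. \<Sum>j\<in>UNIV. A$i$j * X$i$j)"

definition outer :: "real^'n \<Rightarrow> real^'n^'n" where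
  "outer x = (\<chi> i j. x$i * x$j)"

definition Jplus :: "nat \<Rightarrow> (nat \<Rightarrow> real^'n^'n) \<Rightarrow> (real^'n^'n) set" where
  "Jplus m B = {X. psd X \<and> (\<forall>j\<in>{1..m}. frob (B j) X \<ge> 0)}"

definition condition_B :: "nat \<Rightarrow> (nat \<Rightarrow> real^'n^'n) \<Rightarrow> bool" where
  "condition_B m B \<longleftrightarrow> (\<forall>k\<in>{1..m}. {X. psd X \<and> frob (B k) X = 0} \<subseteq> Jplus m B)"

definition sdp_feasible :: "nat \<Rightarrow> (nat \<Rightarrow> real^'n^'n) \<Rightarrow> real^'n^'n \<Rightarrow> (real^'n^'n) set" where
  "sdp_feasible m B H = {X. X \<in> Jplus m B \<and> frob H X = 1}"

definition qcqp_feasible :: "nat \<Rightarrow> (nat \<Rightarrow> real^'n^'n) \<Rightarrow> real^'n^'n \<Rightarrow> (real^'n^'n) set" where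
  "qcqp_feasible m B H = {X. X \<in> Jplus m B \<and> rank X = 1 \<and> frob H X = 1}"

definition optimal_in :: "real^'n^'n \<Rightarrow> (real^'n^'n) set \<Rightarrow> real^'n^'n \<Rightarrow> bool" where
  "optimal_in Q F X \<longleftrightarrow> X \<in> F \<and> (\<forall>Z\<in>F. frob Q X \<le> frob Q Z)"

end

theory Submission
  imports Defs
begin

lemma frob_add2: "frob A (X + Y) = frob A X + frob A Y"
  by (simp add: frob_def algebra_simps sum.distrib)
lemma frob_diff2: "frob A (X - Y) = frob A X - frob A Y"
  by (simp add: frob_def algebra_simps sum_subtractf)
lemma frob_scale2: "frob A (c *\<^sub>R X) = c * frob A X"
  by (simp add: frob_def algebra_simps sum_distrib_left)
lemma frob_zero2[simp]: "frob A 0 = 0"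
  by (simp add: frob_def)
lemma frob_zero1[simp]: "frob 0 X = 0"
  by (simp add: frob_def)
lemma frob_add1: "frob (A + B) X = frob A X + frob B X"
  by (simp add: frob_def algebra_simps sum.distrib)
lemma frob_diff1: "frob (A - B) X = frob A X - frob B X"
  by (simp add: frob_def algebra_simps sum_subtractf)
lemma frob_scale1: "frob (c *\<^sub>R A) X = c * frob A X"
  by (simp add: frob_def algebra_simps sum_distrib_left)
lemma frob_sum1: "finite K \<Longrightarrow> frob (\<Sum>k\<in>K. f k) X = (\<Sum>k\<in>K. frob (f k) X)"
  by (induction K rule: finite_induct) (auto simp: frob_add1 frob_zero1)
lemma frob_sum_list2: "frob A (sum_list (map f vs)) = (\<Sum>v\<leftarrow>vs. frob A (f v))"
  by (induction vs) (auto simp: frob_add2)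

lemma frob_outer: "frob A (outer v) = v \<bullet> (A *v v)"
  by (simp add: frob_def outer_def inner_vec_def matrix_vector_mult_def sum_distrib_left algebra_simps)

lemma outer_scale: "outer (c *\<^sub>R v) = (c^2) *\<^sub>R outer v"
  by (simp add: outer_def vec_eq_iff power2_eq_square algebra_simps)

lemma outer_rot: "outer (c *\<^sub>R v + w) + outer (c *\<^sub>R w - v) = (1 + c^2) *\<^sub>R (outer v + outer w)"
  by (simp add: outer_def vec_eq_iff power2_eq_square algebra_simps)

lemma outer_mulv: "w \<bullet> (outer v *v w) = (v \<bullet> w)^2"
  by (simp add: outer_def inner_vec_def matrix_vector_mult_def sum_distrib_left power2_eq_square
      sum_product algebra_simps)

lemma sym_inner: "symmetric_mat X \<Longrightarrow> u \<bullet> (X *v w) = w \<bullet> (X *v u)"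
  unfolding symmetric_mat_def
  by (metis dot_lmul_matrix inner_commute vector_transpose_matrix)

lemma psd_outer: "psd (outer v)"
  unfolding psd_def symmetric_mat_def
  by (simp add: outer_mulv) (simp add: outer_def transpose_def vec_eq_iff mult.commute)

lemma quad_disc:
  fixes a b c :: real
  assumes "\<forall>t. 0 \<le> a + 2*t*b + t^2*c"
  shows "b^2 \<le> a*c"
proof (cases "c = 0")
  case True
  have "b = 0"
  proof (rule ccontr)
    assume "b \<noteq> 0"
    have "0 \<le> a + 2*(-(a+1)/(2*b))*b + (-(a+1)/(2*b))^2*c" using assms by blast
    also have "\<dots> = -1" using True \<open>b \<noteq> 0\<close> by (simp add: field_simps)
    finally show False by simp
  qed
  then show ?thesis using True by simp
next
  case False
  have c0: "c \<ge> 0"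
  proof (rule ccontr)
    assume "\<not> c \<ge> 0"
    hence c: "c < 0" by simp
    define t where "t = sqrt ((\<bar>a\<bar> + 1) / (-c))"
    have t2: "t^2 = (\<bar>a\<bar> + 1) / (-c)" unfolding t_def using c
      by (intro real_sqrt_pow2) (intro divide_nonneg_pos, auto)
    have "0 \<le> a + 2*t*b + t^2*c" "0 \<le> a + 2*(-t)*b + (-t)^2*c" using assms by blast+
    hence "0 \<le> 2*a + 2*(t^2*c)" by simp
    moreover have "t^2*c = -(\<bar>a\<bar> + 1)" using c t2 by (simp add: field_simps)
    ultimately show False by simp
  qed
  with False have c: "c > 0" by simp
  have "0 \<le> a + 2*(-b/c)*b + (-b/c)^2*c" using assms by blast
  also have "\<dots> = (a*c - b^2)/c" using c by (simp add: field_simps power2_eq_square)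
  finally show ?thesis using c by (simp add: divide_nonneg_pos zero_le_divide_iff)
qed

lemma mv_lin: fixes X :: "real^'n^'n" shows "X *v (u + t *\<^sub>R w) = X *v u + t *\<^sub>R (X *v w)"
  by (simp add: matrix_vector_right_distrib matrix_vector_mult_scaleR)

lemma psd_CS:
  assumes "psd X"
  shows "(u \<bullet> (X *v w))^2 \<le> (u \<bullet> (X *v u)) * (w \<bullet> (X *v w))"
proof -
  have sym: "symmetric_mat X" using assms by (simp add: psd_def)
  have "\<forall>t. 0 \<le> u \<bullet> (X *v u) + 2*t*(u \<bullet> (X *v w)) + t^2*(w \<bullet> (X *v w))"
  proof
    fix t
    have "0 \<le> (u + t *\<^sub>R w) \<bullet> (X *v (u + t *\<^sub>R w))" using assms by (simp add: psd_def)
    also have "\<dots> = u \<bullet> (X *v u) + t*(u \<bullet> (X *v w)) + t * (w \<bullet> (X *v u)) + t^2*(w \<bullet> (X *v w))"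
      by (simp add: mv_lin inner_add_left inner_add_right power2_eq_square algebra_simps)
    also have "\<dots> = u \<bullet> (X *v u) + 2*t*(u \<bullet> (X *v w)) + t^2*(w \<bullet> (X *v w))"
      using sym_inner[OF sym, of w u] by simp
    finally show "0 \<le> u \<bullet> (X *v u) + 2*t*(u \<bullet> (X *v w)) + t^2*(w \<bullet> (X *v w))" .
  qed
  from quad_disc[OF this] show ?thesis by (simp add: mult.commute)
qed


lemma mv_axis: fixes X :: "real^'n^'n" shows "(X *v axis k 1) $ i = X $ i $ k"
  by (simp add: matrix_vector_mult_def axis_def if_distrib cong: if_cong)

lemma axis_inner_mv: fixes X :: "real^'n^'n" shows "axis i 1 \<bullet> (X *v w) = (X *v w) $ i"
  by (simp add: inner_axis')

lemma psd_diag: "psd X \<Longrightarrow> X $ k $ k \<ge> 0"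
  unfolding psd_def using axis_inner_mv mv_axis by metis

lemma psd_zero_row:
  assumes "psd X" "X $ k $ k = 0" shows "X $ k $ j = 0"
proof -
  have "(axis k 1 \<bullet> (X *v axis j 1))^2 \<le> (axis k 1 \<bullet> (X *v axis k 1)) * (axis j 1 \<bullet> (X *v axis j 1))"
    by (rule psd_CS[OF assms(1)])
  then show ?thesis using assms(2) by (simp add: axis_inner_mv mv_axis)
qed

lemma sym_iff: "symmetric_mat (A::real^'n^'n) \<longleftrightarrow> (\<forall>i j. A$i$j = A$j$i)"
  unfolding symmetric_mat_def transpose_def vec_eq_iff by auto

lemma psd_add: "psd A \<Longrightarrow> psd B \<Longrightarrow> psd (A + B)"
  unfolding psd_def sym_iff
  by (simp add: matrix_vector_mult_add_rdistrib inner_add_right)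

lemma chol_step:
  fixes X :: "real^'n^'n"
  assumes X: "psd X" and pos: "X $ k $ k > 0"
  defines "v \<equiv> (1 / sqrt (X$k$k)) *\<^sub>R (X *v axis k 1)"
  shows "psd (X - outer v)" "\<And>j. (X - outer v) $ k $ j = 0"
    "\<And>i. (\<forall>j. X $ i $ j = 0) \<Longrightarrow> (\<forall>j. (X - outer v) $ i $ j = 0)"
proof -
  have sym: "symmetric_mat X" using X by (simp add: psd_def)
  have symij: "X $ i $ j = X $ j $ i" for i j
    using sym unfolding symmetric_mat_def by (metis transpose_def vec_lambda_beta)
  have ov: "outer v $ i $ j = X $ i $ k * X $ j $ k / X $ k $ k" for i j
    using pos by (simp add: v_def outer_def mv_axis power2_eq_square[symmetric] real_sqrt_pow2 [unfolded power2_eq_square])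
  show "(X - outer v) $ k $ j = 0" for j
    using pos by (simp add: ov symij[of j k])
  show "\<forall>j. (X - outer v) $ i $ j = 0" if "\<forall>j. X $ i $ j = 0" for i
    using that by (simp add: ov)
  show "psd (X - outer v)"
    unfolding psd_def
  proof
    show "symmetric_mat (X - outer v)"
      using sym psd_outer[of v] unfolding psd_def sym_iff by simp
    show "\<forall>w. 0 \<le> w \<bullet> ((X - outer v) *v w)"
    proof
      fix w
      have "v \<bullet> w = (1 / sqrt (X$k$k)) * (axis k 1 \<bullet> (X *v w))"
        using sym_inner[OF sym, of "axis k 1" w] by (simp add: v_def inner_commute)
      hence "(v \<bullet> w)^2 = (axis k 1 \<bullet> (X *v w))^2 / X$k$k"
        using pos by (simp add: power_mult_distrib power_divide)
      also have "\<dots> \<le> (axis k 1 \<bullet> (X *v axis k 1)) * (w \<bullet> (X *v w)) / X$k$k"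
        using psd_CS[OF X] pos by (simp add: divide_right_mono)
      also have "\<dots> = w \<bullet> (X *v w)" using pos by (simp add: axis_inner_mv mv_axis)
      finally show "0 \<le> w \<bullet> ((X - outer v) *v w)"
        by (simp add: matrix_vector_mult_diff_rdistrib inner_diff_right outer_mulv)
    qed
  qed
qed

lemma psd_decomp_aux:
  fixes I :: "'n::finite set"
  assumes "finite I"
  shows "\<forall>X::real^'n^'n. psd X \<and> (\<forall>i. i \<notin> I \<longrightarrow> (\<forall>j. X$i$j = 0)) \<longrightarrow> (\<exists>vs. X = sum_list (map outer vs))"
  using assms
proof (induction I rule: finite_induct)
  case empty
  show ?case
  proof (intro allI impI)
    fix X :: "real^'n^'n" assume "psd X \<and> (\<forall>i. i \<notin> {} \<longrightarrow> (\<forall>j. X$i$j = 0))"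
    hence "X = 0" by (simp add: vec_eq_iff)
    thus "\<exists>vs. X = sum_list (map outer vs)" by (intro exI[of _ "[]"]) simp
  qed
next
  case (insert k I)
  show ?case
  proof (intro allI impI)
    fix X :: "real^'n^'n" assume H: "psd X \<and> (\<forall>i. i \<notin> insert k I \<longrightarrow> (\<forall>j. X$i$j = 0))"
    show "\<exists>vs. X = sum_list (map outer vs)"
    proof (cases "X$k$k = 0")
      case True
      hence "\<forall>j. X$k$j = 0" using psd_zero_row H by blast
      hence "\<forall>i. i \<notin> I \<longrightarrow> (\<forall>j. X$i$j = 0)" using H by auto
      thus ?thesis using insert.IH H by blast
    next
      case False
      hence pos: "X$k$k > 0" using psd_diag H by (metis order_le_less)
      define v where "v = (1 / sqrt (X$k$k)) *\<^sub>R (X *v axis k 1)"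
      note cs = chol_step[OF conjunct1[OF H] pos, folded v_def]
      have "\<forall>i. i \<notin> I \<longrightarrow> (\<forall>j. (X - outer v)$i$j = 0)"
      proof (intro allI impI)
        fix i j assume "i \<notin> I"
        show "(X - outer v)$i$j = 0"
        proof (cases "i = k")
          case True thus ?thesis using cs(2) by simp
        next
          case False thus ?thesis using cs(3)[of i] H \<open>i \<notin> I\<close> by blast
        qed
      qed
      then obtain vs where "X - outer v = sum_list (map outer vs)" using insert.IH cs(1) by blast
      hence "X = sum_list (map outer (v # vs))" by (simp add: algebra_simps)
      thus ?thesis by blast
    qed
  qed
qed

lemma psd_decomp: fixes X :: "real^'n^'n" shows "psd X \<Longrightarrow> \<exists>vs. X = sum_list (map outer vs)"
  using psd_decomp_aux[of "UNIV :: 'n set"] by simp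

lemma psd_sum_outer: "psd (sum_list (map outer vs))"
  by (induction vs) (auto simp: psd_add psd_outer, simp add: psd_def sym_iff)

lemma frob_psd_nonneg:
  assumes "psd Y" "psd X" shows "frob Y X \<ge> 0"
proof -
  obtain vs where "X = sum_list (map outer vs)" using psd_decomp assms(2) by blast
  hence "frob Y X = (\<Sum>v\<leftarrow>vs. v \<bullet> (Y *v v))" by (simp add: frob_sum_list2 frob_outer)
  also have "\<dots> \<ge> 0" using assms(1) unfolding psd_def by (intro sum_list_nonneg) auto
  finally show ?thesis .
qed


lemma rank_outer:
  fixes x :: "real^'n"
  assumes "x \<noteq> 0" shows "rank (outer x) = 1"
proof -
  have r: "row i (outer x) = x$i *\<^sub>R x" for i
    by (simp add: row_def outer_def vec_eq_iff)
  have rows: "rows (outer x) = {x$i *\<^sub>R x | i. True}"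
    by (simp add: rows_def r)
  obtain i where xi: "x$i \<noteq> 0" using assms by (auto simp: vec_eq_iff)
  have "span (rows (outer x)) = span {x}"
  unfolding span_eq
  proof
    show "rows (outer x) \<subseteq> span {x}" by (auto simp: rows span_scale span_base)
    have "x = (1 / x$i) *\<^sub>R (x$i *\<^sub>R x)" using xi by simp
    moreover have "x$i *\<^sub>R x \<in> rows (outer x)" by (auto simp: rows)
    ultimately have "x \<in> span (rows (outer x))" by (metis span_base span_scale)
    thus "{x} \<subseteq> span (rows (outer x))" by simp
  qed
  hence "dim (rows (outer x)) = dim {x}" by (rule span_eq_dim)
  thus ?thesis using assms by (simp add: row_rank_def)
qed

lemma signs:
  fixes f :: "'a \<Rightarrow> real"
  assumes "sum_list (map f vs) = 0" "vs \<noteq> []" "\<forall>v\<in>set vs. f v \<noteq> 0"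
  shows "\<exists>v\<in>set vs. f v > 0" "\<exists>w\<in>set vs. f w < 0"
proof -
  show "\<exists>v\<in>set vs. f v > 0"
  proof (rule ccontr)
    assume "\<not> ?thesis"
    hence "\<forall>x\<in>set (map (\<lambda>v. - f v) vs). 0 \<le> x" by auto
    moreover have "sum_list (map (\<lambda>v. - f v) vs) = 0"
    proof -
      have "sum_list (map (\<lambda>v. - f v) vs) = - sum_list (map f vs)" by (induction vs) auto
      thus ?thesis using assms(1) by simp
    qed
    ultimately have "\<forall>x\<in>set (map (\<lambda>v. - f v) vs). x = 0"
      using sum_list_nonneg_eq_0_iff by blast
    thus False using assms(2,3) by (cases vs) auto
  qed
  show "\<exists>v\<in>set vs. f v < 0"
  proof (rule ccontr)
    assume "\<not> ?thesis"
    hence "\<forall>x\<in>set (map f vs). 0 \<le> x" by auto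
    hence "\<forall>x\<in>set (map f vs). x = 0"
      using sum_list_nonneg_eq_0_iff assms(1) by blast
    thus False using assms(2,3) by (cases vs) auto
  qed
qed

lemma qexp: fixes B :: "real^'n^'n" shows
  "frob B (outer (c *\<^sub>R v + w)) = c^2 * frob B (outer v) + c * (v \<bullet> (B *v w) + w \<bullet> (B *v v)) + frob B (outer w)"
  by (simp add: frob_outer matrix_vector_right_distrib matrix_vector_mult_scaleR inner_add_left
      inner_add_right power2_eq_square algebra_simps)

lemma rotate:
  fixes B :: "real^'n^'n"
  assumes p: "frob B (outer v) > 0" and n: "frob B (outer w) < 0"
  shows "\<exists>a b. outer a + outer b = outer v + outer w \<and> frob B (outer a) = 0"
proof -
  define P where "P = frob B (outer v)"
  define N where "N = frob B (outer w)"
  define be where "be = v \<bullet> (B *v w) + w \<bullet> (B *v v)"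
  define S where "S = sqrt (be^2 - 4*P*N)"
  have D: "be^2 - 4*P*N \<ge> 0" using p n unfolding P_def N_def
    by (smt (verit) mult_pos_neg zero_le_power2)
  have S2: "S^2 = be^2 - 4*P*N" using D by (simp add: S_def)
  define c where "c = (S - be) / (2*P)"
  have Pp: "P > 0" using p by (simp add: P_def)
  have "P * c^2 + c * be + N = (S^2 - be^2 + 4*P*N) / (4*P)"
    using Pp by (simp add: c_def field_simps power2_eq_square)
  also have "\<dots> = 0" using S2 by simp
  finally have root: "c^2 * P + c * be + N = 0" by (simp add: mult.commute)
  have q0: "frob B (outer (c *\<^sub>R v + w)) = 0"
    using root by (simp add: qexp P_def N_def be_def)
  define k where "k = 1 / sqrt (1 + c^2)"
  have cpos: "1 + c^2 > 0" by (simp add: add_pos_nonneg)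
  have k2: "k^2 * (1 + c^2) = 1"
    using cpos by (simp add: k_def power_divide)
  define a where "a = k *\<^sub>R (c *\<^sub>R v + w)"
  define b where "b = k *\<^sub>R (c *\<^sub>R w - v)"
  have "outer a + outer b = (k^2 * (1 + c^2)) *\<^sub>R (outer v + outer w)"
    by (simp add: a_def b_def outer_scale scaleR_add_right[symmetric] outer_rot)
  also have "\<dots> = outer v + outer w" using k2 by simp
  finally have "outer a + outer b = outer v + outer w" .
  moreover have "frob B (outer a) = 0" by (simp add: a_def outer_scale frob_scale2 q0)
  ultimately show ?thesis by blast
qed

lemma peel:
  fixes B :: "real^'n^'n"
  assumes "frob B (sum_list (map outer vs)) = 0" "vs \<noteq> []"
  shows "\<exists>a rest. length rest < length vs \<and> sum_list (map outer vs) = outer a + sum_list (map outer rest)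
           \<and> frob B (outer a) = 0"
proof (cases "\<exists>v\<in>set vs. frob B (outer v) = 0")
  case True
  then obtain v where v: "v \<in> set vs" "frob B (outer v) = 0" by blast
  have "length (remove1 v vs) < length vs" using v(1) by (simp add: length_remove1) (cases vs, auto)
  thus ?thesis using v sum_list_map_remove1[OF v(1), of outer] by blast
next
  case False
  have sumq: "sum_list (map (\<lambda>v. frob B (outer v)) vs) = 0"
    using assms(1) by (simp add: frob_sum_list2)
  obtain v where v: "v \<in> set vs" "frob B (outer v) > 0" using signs(1)[OF sumq assms(2)] False by blast
  obtain w where w: "w \<in> set vs" "frob B (outer w) < 0" using signs(2)[OF sumq assms(2)] False by blast
  have vw: "v \<noteq> w" using v w by auto
  obtain a b where ab: "outer a + outer b = outer v + outer w" "frob B (outer a) = 0"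
    using rotate[OF v(2) w(2)] by blast
  define r where "r = remove1 w (remove1 v vs)"
  have w': "w \<in> set (remove1 v vs)" using w(1) vw by (simp add: in_set_remove1)
  have "sum_list (map outer vs) = outer v + (outer w + sum_list (map outer r))"
    unfolding r_def using sum_list_map_remove1[OF v(1), of outer] sum_list_map_remove1[OF w', of outer]
    by simp
  also have "\<dots> = outer a + sum_list (map outer (b # r))" using ab(1) by (simp add: algebra_simps)
  finally have eq: "sum_list (map outer vs) = outer a + sum_list (map outer (b # r))" .
  have l1: "length (remove1 v vs) = length vs - 1" using v(1) by (simp add: length_remove1)
  have l2: "length r = length (remove1 v vs) - 1" using w' by (simp add: r_def length_remove1)
  have l3: "length (remove1 v vs) > 0" using w' by (cases "remove1 v vs") auto
  have "length (b # r) < length vs" using l1 l2 l3 by simp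
  thus ?thesis using eq ab(2) by blast
qed

lemma mix:
  fixes B H :: "real^'n^'n"
  shows "frob B (sum_list (map outer vs)) = 0 \<longrightarrow> frob H (sum_list (map outer vs)) > 0 \<longrightarrow>
    (\<exists>x ws. sum_list (map outer vs) = outer x + sum_list (map outer ws) \<and> frob B (outer x) = 0 \<and> frob H (outer x) > 0)"
proof (induction vs rule: length_induct)
  case (1 vs)
  show ?case
  proof (intro impI)
    assume b0: "frob B (sum_list (map outer vs)) = 0" and h0: "frob H (sum_list (map outer vs)) > 0"
    have "vs \<noteq> []" using h0 by auto
    then obtain a rest where ar: "length rest < length vs"
      "sum_list (map outer vs) = outer a + sum_list (map outer rest)" "frob B (outer a) = 0"
      using peel[OF b0] by blast
    show "\<exists>x ws. sum_list (map outer vs) = outer x + sum_list (map outer ws) \<and> frob B (outer x) = 0 \<and> frob H (outer x) > 0"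
    proof (cases "frob H (outer a) > 0")
      case True thus ?thesis using ar by blast
    next
      case False
      have "frob B (sum_list (map outer rest)) = 0" using b0 ar by (simp add: frob_add2)
      moreover have "frob H (sum_list (map outer rest)) > 0" using h0 ar False by (simp add: frob_add2)
      ultimately obtain x ws where xw: "sum_list (map outer rest) = outer x + sum_list (map outer ws)"
        "frob B (outer x) = 0" "frob H (outer x) > 0" using "1.IH" ar(1) by blast
      have "sum_list (map outer vs) = outer x + sum_list (map outer (a # ws))"
        using ar(2) xw(1) by (simp add: algebra_simps)
      thus ?thesis using xw by blast
    qed
  qed
qed


theorem mainTheorem4:
  fixes Q H Xbar Ybar :: "real^'n^'n" and B :: "nat \<Rightarrow> real^'n^'n" and m :: nat
    and tbar :: real and ybar :: "nat \<Rightarrow> real"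
  assumes symQ: "symmetric_mat Q" and symH: "symmetric_mat H"
    and symB: "\<forall>k\<in>{1..m}. symmetric_mat (B k)"
    and condB: "condition_B m B"
    and symX: "symmetric_mat Xbar"
    and Xfeas: "Xbar \<in> Jplus m B" and HX: "frob H Xbar = 1"
    and ypos: "\<forall>k\<in>{1..m}. ybar k \<ge> 0"
    and Ypsd: "psd Ybar"
    and dual: "Q - tbar *\<^sub>R H - (\<Sum>k=1..m. ybar k *\<^sub>R B k) = Ybar"
    and compl: "\<forall>k\<in>{1..m}. ybar k * frob (B k) Xbar = 0"
    and YX: "frob Ybar Xbar = 0"
    and active: "\<exists>k\<in>{1..m}. frob (B k) Xbar = 0"
  shows "\<exists>(x::real^'n) \<tau>. \<tau> \<ge> 1 / real (rank Xbar) \<and> frob H (outer x) = \<tau> \<and>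
           optimal_in Q (sdp_feasible m B H) ((1/\<tau>) *\<^sub>R outer x) \<and>
           optimal_in Q (qcqp_feasible m B H) ((1/\<tau>) *\<^sub>R outer x) \<and>
           frob Q ((1/\<tau>) *\<^sub>R outer x) = frob Q Xbar"
proof -
  obtain k0 where k0: "k0 \<in> {1..m}" "frob (B k0) Xbar = 0" using active by blast
  have Xpsd: "psd Xbar" using Xfeas by (simp add: Jplus_def)
  have Qeq: "Q = Ybar + tbar *\<^sub>R H + (\<Sum>k=1..m. ybar k *\<^sub>R B k)"
    using dual by (simp add: algebra_simps)
  have Qexp: "frob Q X = frob Ybar X + tbar * frob H X + (\<Sum>k=1..m. ybar k * frob (B k) X)" for X
    by (subst Qeq) (simp add: frob_add1 frob_scale1 frob_sum1)
  have lowb: "frob Q X \<ge> tbar * frob H X" if "X \<in> Jplus m B" for X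
  proof -
    have "frob Ybar X \<ge> 0" using that Ypsd frob_psd_nonneg by (auto simp: Jplus_def)
    moreover have "(\<Sum>k=1..m. ybar k * frob (B k) X) \<ge> 0"
      using that ypos by (intro sum_nonneg) (simp add: Jplus_def)
    ultimately show ?thesis using Qexp[of X] by simp
  qed
  have Qbar: "frob Q Xbar = tbar"
    using Qexp[of Xbar] YX HX compl by simp
  obtain vs where vs: "Xbar = sum_list (map outer vs)" using psd_decomp Xpsd by blast
  obtain x ws where xw: "Xbar = outer x + sum_list (map outer ws)" "frob (B k0) (outer x) = 0"
    "frob H (outer x) > 0"
    using mix[of "B k0" vs H] k0(2) HX vs by auto
  define P where "P = sum_list (map outer ws)"
  have Ppsd: "psd P" by (simp add: P_def psd_sum_outer)
  have BP: "frob (B k0) P = 0" using k0(2) xw by (simp add: P_def frob_add2)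
  have cB: "{X. psd X \<and> frob (B k0) X = 0} \<subseteq> Jplus m B" using condB k0(1) by (simp add: condition_B_def)
  have PJ: "P \<in> Jplus m B" using cB Ppsd BP by blast
  have xJ: "outer x \<in> Jplus m B" using cB psd_outer xw(2) by blast
  define h where "h = frob H (outer x)"
  have hpos: "h > 0" using xw by (simp add: h_def)
  have "frob Q Xbar = frob Q (outer x) + frob Q P" "frob H Xbar = frob H (outer x) + frob H P"
    using xw(1) by (simp_all add: P_def frob_add2)
  hence e1: "frob Q (outer x) + frob Q P = tbar" "h + frob H P = 1" using Qbar HX by (simp_all add: h_def)
  have e2: "tbar * h + tbar * frob H P = tbar" using e1(2) by (metis distrib_left mult.right_neutral)
  have Qx: "frob Q (outer x) = tbar * h"
    using lowb[OF PJ] lowb[OF xJ] e1(1) e2 unfolding h_def by linarith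
  define x' where "x' = (1 / sqrt h) *\<^sub>R x"
  have ox: "outer x' = (1/h) *\<^sub>R outer x"
    using hpos by (simp add: x'_def outer_scale power_divide)
  have Hx': "frob H (outer x') = 1" using hpos by (simp add: ox frob_scale2 h_def)
  have Qx': "frob Q (outer x') = tbar" using hpos by (simp add: ox frob_scale2 Qx)
  have Bx': "frob (B k0) (outer x') = 0" by (simp add: ox frob_scale2 xw(2))
  have x'J: "outer x' \<in> Jplus m B" using cB psd_outer Bx' by blast
  have x'nz: "x' \<noteq> 0" using Hx' by (auto simp: outer_def frob_def)
  have rk: "rank (outer x') = 1" using rank_outer[OF x'nz] .
  have sdpx: "outer x' \<in> sdp_feasible m B H" using x'J Hx' by (simp add: sdp_feasible_def)
  have lb1: "frob Q Z \<ge> tbar" if "Z \<in> sdp_feasible m B H" for Z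
    using lowb[of Z] that by (simp add: sdp_feasible_def)
  have opt1: "optimal_in Q (sdp_feasible m B H) (outer x')"
    unfolding optimal_in_def using sdpx Qx' lb1 by auto
  have opt2: "optimal_in Q (qcqp_feasible m B H) (outer x')"
    unfolding optimal_in_def using x'J Hx' rk Qx' lb1 by (auto simp: qcqp_feasible_def sdp_feasible_def)
  have tau: "(1::real) \<ge> 1 / real (rank Xbar)"
    by (cases "rank Xbar = 0") auto
  show ?thesis
    by (rule exI[of _ x'], rule exI[of _ 1]) (simp add: tau Hx' opt1 opt2 Qx' Qbar)
qed

end
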